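(* Let $U_0$ be the $T_G$-ideal of $F\langle X|G\rangle$ generated by the polynomials: $x_{e}^{(1)}x_{e}^{(2)}-x_{e}^{(2)}x_{e}^{(1)}$ if $e\in G_0$; $x_{g}^{(1)}x_{g^{-1}}^{(2)}x_{g}^{(3)}-x_{g}^{(3)}x_{g^{-1}}^{(2)}x_{g}^{(1)}$ for $g\neq e$ with $B_g\neq0$; and $x_g^{(1)}$ for $g$ with $B_g=0$. If $m(x_{h_1}^{(1)},\dots,x_{h_p}^{(p)})$ and $n(x_{h_1}^{(1)},\dots,x_{h_p}^{(p)})$ are two monomials in $F\langle X|G\rangle$ such that the matrices $m(\xi_{h_1}^{(1)},\dots,\xi_{h_p}^{(p)})$ and $n(\xi_{h_1}^{(1)},\dots,\xi_{h_p}^{(p)})$ have, in the same position, the same nonzero entry, then $m\equiv n$ modulo $U_0$.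
   Context: Let $F$ be an infinite field, $G$ a group with identity $e$, $(g_1,\dots,g_n)\in G^n$ with pairwise distinct entries; $M_n(F)$ has the elementary grading in which the component of degree $g$ is spanned by the matrix units $e_{ij}$ with $g_i^{-1}g_j=g$. $B$ is a subalgebra of $M_n(F)$ spanned by a set of matrix units, $B_g=B\cap M_n(F)_g$, $G_0=\{g:B_g\neq0\}$. $F\langle X|G\rangle$ is the free associative algebra on variables $x_g^{(i)}$ ($g\in G$, $i\ge1$) of degree $g$; a $T_G$-ideal is an ideal invariant under degree-preserving endomorphisms. For $g\in G_0$, $D_{\widehat g}$ is the set of $i$ with $e_{ij}\in B_g$ for some (necessarily unique) $j=:\widehat g(i)$. With $\Omega=F[\xi_{ij}^{(k)}]$ the commutative polynomial ring, the generic element is $\xi_g^{(k)}=\sum_{i\in D_{\widehat g}}\xi^{(k)}_{i\widehat g(i)}e_{i\widehat g(i)}\in M_n(\Omega)$ for $g\in G_0$ (and $\xi_g^{(k)}=0$ if $g\notin G_0$). *)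

theory Defs
  imports Main "HOL-Library.Poly_Mapping"
begin

text \<open>
  The group G is a type of class group_add (written additively,
  NOT assumed commutative): e = 0, g^{-1} = -g, g h = g + h.
  Matrix indices are 0,...,n-1.  The tuple (g_1,...,g_n) is a function gs on
  {0..<n}.  The subalgebra B spanned by matrix units is given by the set
  S of index pairs (i,j) with e_ij in B.
\<close>

text \<open>Variables x_g^(i) are pairs (g,i).  A polynomial is a coefficient function
  on words (lists of variables) with finite support.  F<X|G> is taken
  non-unital: its elements have zero constant term.\<close>

type_synonym ('g, 'a) fpoly = "('g \<times> nat) list \<Rightarrow> 'a"

definition fsupp :: "('g, 'a::zero) fpoly \<Rightarrow> ('g \<times> nat) list set" where
  "fsupp p = {w. p w \<noteq> 0}"

definition free_alg :: "('g, 'a::zero) fpoly set" where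
  "free_alg = {p. finite (fsupp p) \<and> p [] = 0}"

definition fmon :: "('g \<times> nat) list \<Rightarrow> ('g, 'a::{zero,one}) fpoly" where
  "fmon w = (\<lambda>u. if u = w then 1 else 0)"

definition fadd :: "('g, 'a::plus) fpoly \<Rightarrow> ('g, 'a) fpoly \<Rightarrow> ('g, 'a) fpoly" where
  "fadd p q = (\<lambda>w. p w + q w)"

definition fdiff :: "('g, 'a::minus) fpoly \<Rightarrow> ('g, 'a) fpoly \<Rightarrow> ('g, 'a) fpoly" where
  "fdiff p q = (\<lambda>w. p w - q w)"

definition fsmult :: "'a::times \<Rightarrow> ('g, 'a) fpoly \<Rightarrow> ('g, 'a) fpoly" where
  "fsmult c p = (\<lambda>w. c * p w)"

definition fmul :: "('g, 'a::comm_semiring_1) fpoly \<Rightarrow> ('g, 'a) fpoly \<Rightarrow> ('g, 'a) fpoly" where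
  "fmul p q = (\<lambda>w. \<Sum>k\<le>length w. p (take k w) * q (drop k w))"

definition fprod :: "('g, 'a::comm_semiring_1) fpoly list \<Rightarrow> ('g, 'a) fpoly" where
  "fprod ps = foldr fmul ps (fmon [])"

definition wdeg :: "('g::group_add \<times> nat) list \<Rightarrow> 'g" where
  "wdeg w = sum_list (map fst w)"

definition homogeneous :: "'g::group_add \<Rightarrow> ('g, 'a::zero) fpoly \<Rightarrow> bool" where
  "homogeneous g p \<longleftrightarrow> (\<forall>w. p w \<noteq> 0 \<longrightarrow> wdeg w = g)"

text \<open>Degree-preserving endomorphisms of F<X|G> are exactly the substitutions
  x_g^(i) |-> sigma(g,i) with sigma(g,i) an element of F<X|G> of degree g.\<close>
definition graded_subst :: "('g::group_add \<times> nat \<Rightarrow> ('g, 'a::zero) fpoly) \<Rightarrow> bool" where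
  "graded_subst \<sigma> \<longleftrightarrow> (\<forall>v. \<sigma> v \<in> free_alg \<and> homogeneous (fst v) (\<sigma> v))"

definition subst :: "('g \<times> nat \<Rightarrow> ('g, 'a::comm_semiring_1) fpoly) \<Rightarrow> ('g, 'a) fpoly \<Rightarrow> ('g, 'a) fpoly" where
  "subst \<sigma> p = (\<lambda>u. \<Sum>w\<in>fsupp p. p w * fprod (map \<sigma> w) u)"

definition is_ideal :: "('g, 'a::comm_ring_1) fpoly set \<Rightarrow> bool" where
  "is_ideal I \<longleftrightarrow> I \<subseteq> free_alg \<and> (\<lambda>_. 0) \<in> I
     \<and> (\<forall>p\<in>I. \<forall>q\<in>I. fadd p q \<in> I)
     \<and> (\<forall>c. \<forall>p\<in>I. fsmult c p \<in> I)
     \<and> (\<forall>a\<in>free_alg. \<forall>p\<in>I. fmul a p \<in> I \<and> fmul p a \<in> I)"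

definition is_TG_ideal :: "('g::group_add, 'a::comm_ring_1) fpoly set \<Rightarrow> bool" where
  "is_TG_ideal I \<longleftrightarrow> is_ideal I \<and> (\<forall>\<sigma>. graded_subst \<sigma> \<longrightarrow> (\<forall>p\<in>I. subst \<sigma> p \<in> I))"

definition TG_ideal_gen :: "('g::group_add, 'a::comm_ring_1) fpoly set \<Rightarrow> ('g, 'a) fpoly set" where
  "TG_ideal_gen T = \<Inter>{I. is_TG_ideal I \<and> T \<subseteq> I}"

text \<open>B_g is spanned by the matrix units e_ij in B with g_i^{-1} g_j = g.\<close>
definition Bg :: "(nat \<Rightarrow> 'g::group_add) \<Rightarrow> (nat \<times> nat) set \<Rightarrow> 'g \<Rightarrow> (nat \<times> nat) set" where
  "Bg gs S g = {(i,j) \<in> S. - gs i + gs j = g}"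

definition G0 :: "(nat \<Rightarrow> 'g::group_add) \<Rightarrow> (nat \<times> nat) set \<Rightarrow> 'g set" where
  "G0 gs S = {g. Bg gs S g \<noteq> {}}"

definition U0_gens :: "(nat \<Rightarrow> 'g::group_add) \<Rightarrow> (nat \<times> nat) set \<Rightarrow> ('g, 'a::comm_ring_1) fpoly set" where
  "U0_gens gs S =
     {fdiff (fmon [(0,1),(0,2)]) (fmon [(0,2),(0,1)]) | _::unit. 0 \<in> G0 gs S}
   \<union> {fdiff (fmon [(g,1),(-g,2),(g,3)]) (fmon [(g,3),(-g,2),(g,1)]) | g. g \<noteq> 0 \<and> g \<in> G0 gs S}
   \<union> {fmon [(g,1)] | g. g \<notin> G0 gs S}"

definition U0 :: "(nat \<Rightarrow> 'g::group_add) \<Rightarrow> (nat \<times> nat) set \<Rightarrow> ('g, 'a::comm_ring_1) fpoly set" where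
  "U0 gs S = TG_ideal_gen (U0_gens gs S)"

text \<open>Omega = F[xi_ij^(k)], commutative polynomials: finitely supported maps from
  monomials (finitely supported exponent maps on variables (i,j,k)) to F.\<close>
type_synonym 'a Omega = "((nat \<times> nat \<times> nat) \<Rightarrow>\<^sub>0 nat) \<Rightarrow>\<^sub>0 'a"

definition xi :: "nat \<Rightarrow> nat \<Rightarrow> nat \<Rightarrow> 'a::comm_ring_1 Omega" where
  "xi i j k = Poly_Mapping.single (Poly_Mapping.single (i,j,k) 1) 1"

definition mmul :: "nat \<Rightarrow> (nat \<Rightarrow> nat \<Rightarrow> 'b::comm_ring_1) \<Rightarrow> (nat \<Rightarrow> nat \<Rightarrow> 'b) \<Rightarrow> (nat \<Rightarrow> nat \<Rightarrow> 'b)" where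
  "mmul n A C = (\<lambda>i j. \<Sum>l<n. A i l * C l j)"

definition mone :: "nat \<Rightarrow> nat \<Rightarrow> 'b::comm_ring_1" where
  "mone = (\<lambda>i j. if i = j then 1 else 0)"

definition mprod :: "nat \<Rightarrow> (nat \<Rightarrow> nat \<Rightarrow> 'b::comm_ring_1) list \<Rightarrow> (nat \<Rightarrow> nat \<Rightarrow> 'b)" where
  "mprod n As = foldr (mmul n) As mone"

text \<open>D_g-hat = rows i having a (unique) j = g-hat(i) with e_ij in B_g.\<close>
definition Dhat :: "(nat \<Rightarrow> 'g::group_add) \<Rightarrow> (nat \<times> nat) set \<Rightarrow> 'g \<Rightarrow> nat set" where
  "Dhat gs S g = {i. \<exists>j. (i,j) \<in> Bg gs S g}"

definition ghat :: "(nat \<Rightarrow> 'g::group_add) \<Rightarrow> (nat \<times> nat) set \<Rightarrow> 'g \<Rightarrow> nat \<Rightarrow> nat" where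
  "ghat gs S g i = (THE j. (i,j) \<in> Bg gs S g)"

text \<open>Generic element xi_g^(k) = sum over i in D_g-hat of xi_{i,ghat(i)}^(k) e_{i,ghat(i)}
  (it is 0 when g is not in G0, since then D_g-hat is empty).\<close>
definition generic :: "(nat \<Rightarrow> 'g::group_add) \<Rightarrow> (nat \<times> nat) set \<Rightarrow> 'g \<Rightarrow> nat
    \<Rightarrow> (nat \<Rightarrow> nat \<Rightarrow> 'a::comm_ring_1 Omega)" where
  "generic gs S g k = (\<lambda>i j. if i \<in> Dhat gs S g \<and> j = ghat gs S g i then xi i j k else 0)"

text \<open>A monomial m(x_{h_1}^(1),...,x_{h_p}^(p)) is a word w over variable indices;
  its image in F<X|G> and its evaluation on the generic elements.\<close>
definition mono_poly :: "(nat \<Rightarrow> 'g) \<Rightarrow> nat list \<Rightarrow> ('g, 'a::comm_ring_1) fpoly" where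
  "mono_poly h w = fmon (map (\<lambda>k. (h k, k)) w)"

definition mono_eval :: "(nat \<Rightarrow> 'g::group_add) \<Rightarrow> (nat \<times> nat) set \<Rightarrow> nat \<Rightarrow> (nat \<Rightarrow> 'g)
    \<Rightarrow> nat list \<Rightarrow> (nat \<Rightarrow> nat \<Rightarrow> 'a::comm_ring_1 Omega)" where
  "mono_eval gs S n h w = mprod n (map (\<lambda>k. generic gs S (h k) k) w)"

end

theory Submission
  imports Defs "HOL-Library.Multiset"
begin

lemma tk: "k \<le> length w \<Longrightarrow> (take k w = a \<and> drop k w = b) \<longleftrightarrow> (k = length a \<and> w = a@b)"
  by auto

lemma fmul_fmon: "fmul (fmon a) (fmon b) = (fmon (a@b) :: ('g,'a::comm_semiring_1) fpoly)"
proof (rule ext)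
  fix w :: "('g \<times> nat) list"
  have eq: "fmon a (take k w) * fmon b (drop k w) = (if k = length a then fmon (a@b) w else (0::'a))"
    if "k \<in> {..length w}" for k
  proof -
    have "(take k w = a \<and> drop k w = b) \<longleftrightarrow> (k = length a \<and> w = a@b)"
      using that tk by simp
    then show ?thesis unfolding fmon_def
      by (cases "take k w = a \<and> drop k w = b") (simp_all only: if_True if_False, auto)
  qed
  have "fmul (fmon a) (fmon b) w = (\<Sum>k\<in>{..length w}. (if k = length a then fmon (a@b) w else (0::'a)))"
    unfolding fmul_def using eq by (rule sum.cong[OF refl])
  also have "\<dots> = (if length a \<in> {..length w} then fmon (a@b) w else 0)"
    by (rule sum.delta[OF finite_atMost])
  also have "\<dots> = fmon (a@b) w"
    unfolding fmon_def by auto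
  finally show "fmul (fmon a) (fmon b) w = (fmon (a@b) w :: 'a)" .
qed

lemma fsupp_fmon: "fsupp (fmon a :: ('g,'a::zero_neq_one) fpoly) = {a}"
  by (auto simp: fsupp_def fmon_def)

lemma fmon_free: "a \<noteq> [] \<Longrightarrow> (fmon a :: ('g,'a::zero_neq_one) fpoly) \<in> free_alg"
  by (simp add: free_alg_def fsupp_fmon) (simp add: fmon_def)

lemma zero_free: "(\<lambda>_. 0) \<in> free_alg"
  by (simp add: free_alg_def fsupp_def)

lemma fmul_Nil: "fmul p (fmon []) = (p :: ('g,'a::comm_semiring_1) fpoly)"
proof (rule ext)
  fix w :: "('g \<times> nat) list"
  have "fmul p (fmon []) w = (\<Sum>k\<in>{..length w}. (if k = length w then p w else 0))"
    unfolding fmul_def by (rule sum.cong) (auto simp: fmon_def)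
  then show "fmul p (fmon []) w = (p w :: 'a)" by simp
qed

lemma fmul_fdiff_r: "fmul p (fdiff q r) = fdiff (fmul p q) (fmul p r :: ('g,'a::comm_ring_1) fpoly)"
  by (simp add: fmul_def fdiff_def fun_eq_iff right_diff_distrib sum_subtractf)

lemma fmul_fdiff_l: "fmul (fdiff q r) p = fdiff (fmul q p) (fmul r p :: ('g,'a::comm_ring_1) fpoly)"
  by (simp add: fmul_def fdiff_def fun_eq_iff left_diff_distrib sum_subtractf)

lemma fprod_Cons: "fprod (p # ps) = fmul p (fprod ps)"
  by (simp add: fprod_def)

lemma fprod_fmons: "fprod (map fmon ws) = (fmon (concat ws) :: ('g,'a::comm_semiring_1) fpoly)"
  by (induction ws) (simp_all add: fprod_def fmul_fmon)

lemma subst_diff: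
  assumes "u \<noteq> v"
  shows "subst \<sigma> (fdiff (fmon u) (fmon v)) = fdiff (fprod (map \<sigma> u)) (fprod (map \<sigma> v) :: ('g,'a::field) fpoly)"
proof -
  have "fsupp (fdiff (fmon u) (fmon v) :: ('g,'a) fpoly) = {u,v}"
    using assms by (auto simp: fsupp_def fdiff_def fmon_def)
  then show ?thesis using assms
    by (simp add: subst_def fun_eq_iff fdiff_def fmon_def)
qed

lemma homog_fmon: "wdeg a = g \<Longrightarrow> homogeneous g (fmon a)"
  by (simp add: homogeneous_def fmon_def)

lemma homog_zero: "homogeneous g (\<lambda>_. 0)"
  by (simp add: homogeneous_def)

fun walk :: "nat \<Rightarrow> (nat \<times> nat \<times> nat) list \<Rightarrow> nat \<Rightarrow> bool" where
  "walk i [] j = (i = j)"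
| "walk i ((p,q,k)#es) j = (p = i \<and> walk q es j)"

lemma walk_append: "walk i (A@B) j \<longleftrightarrow> (\<exists>x. walk i A x \<and> walk x B j)"
  by (induction i A j rule: walk.induct) auto

lemma crossing:
  "walk a es j \<Longrightarrow> a \<notin> V \<Longrightarrow> (\<exists>(p,q,k)\<in>set es. p \<in> V) \<Longrightarrow> \<exists>(p,q,k)\<in>set es. p \<notin> V \<and> q \<in> V"
proof (induction a es j rule: walk.induct)
  case (1 i j) then show ?case by simp
next
  case (2 i p q k es j)
  show ?case
  proof (cases "q \<in> V")
    case True then show ?thesis using 2 by auto
  next
    case False
    have "\<exists>(p,q,k)\<in>set es. p \<in> V" using 2 by auto
    then show ?thesis using 2 False by auto
  qed
qed

lemma walk_src: "walk a R j \<Longrightarrow> (p,q,k) \<in> set R \<Longrightarrow> p = a \<or> (\<exists>(p',q',k')\<in>set R. q' = p)"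
  by (induction a R j rule: walk.induct) auto


locale setting =
  fixes n :: nat and gs :: "nat \<Rightarrow> 'g::group_add" and S :: "(nat \<times> nat) set"
    and h :: "nat \<Rightarrow> 'g" and I :: "('g, 'a::field) fpoly set"
  assumes inj: "inj_on gs {0..<n}"
    and Ssub: "S \<subseteq> {0..<n} \<times> {0..<n}"
    and Strans: "\<And>i j k. (i,j) \<in> S \<Longrightarrow> (j,k) \<in> S \<Longrightarrow> (i,k) \<in> S"
    and TG: "is_TG_ideal I"
    and gens: "U0_gens gs S \<subseteq> I"
begin

definition okE :: "nat \<times> nat \<times> nat \<Rightarrow> bool" where
  "okE e = (case e of (p,q,k) \<Rightarrow> (p,q) \<in> Bg gs S (h k))"

definition wd :: "(nat \<times> nat \<times> nat) list \<Rightarrow> ('g \<times> nat) list" where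
  "wd es = map (\<lambda>(p,q,k). (h k, k)) es"

definition eqv :: "(nat \<times> nat \<times> nat) list \<Rightarrow> (nat \<times> nat \<times> nat) list \<Rightarrow> bool" where
  "eqv A B \<longleftrightarrow> fdiff (fmon (wd A)) (fmon (wd B)) \<in> I"

lemma wd_append[simp]: "wd (A@B) = wd A @ wd B" by (simp add: wd_def)
lemma wd_Nil[simp]: "wd [] = []" by (simp add: wd_def)
lemma wd_empty_iff[simp]: "wd A = [] \<longleftrightarrow> A = []" by (simp add: wd_def)

lemma I_zero: "(\<lambda>_. 0) \<in> I" using TG by (simp add: is_TG_ideal_def is_ideal_def)
lemma I_add: "p \<in> I \<Longrightarrow> q \<in> I \<Longrightarrow> fadd p q \<in> I" using TG by (simp add: is_TG_ideal_def is_ideal_def)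
lemma I_smult: "p \<in> I \<Longrightarrow> fsmult c p \<in> I" using TG by (simp add: is_TG_ideal_def is_ideal_def)
lemma I_mull: "a \<in> free_alg \<Longrightarrow> p \<in> I \<Longrightarrow> fmul a p \<in> I" using TG by (simp add: is_TG_ideal_def is_ideal_def)
lemma I_mulr: "a \<in> free_alg \<Longrightarrow> p \<in> I \<Longrightarrow> fmul p a \<in> I" using TG by (simp add: is_TG_ideal_def is_ideal_def)
lemma I_subst: "graded_subst \<sigma> \<Longrightarrow> p \<in> I \<Longrightarrow> subst \<sigma> p \<in> I" using TG by (simp add: is_TG_ideal_def)

lemma eqv_refl: "eqv A A"
proof -
  have "fdiff (fmon (wd A)) (fmon (wd A)) = (\<lambda>_. (0::'a))" by (simp add: fdiff_def)
  then show ?thesis using I_zero by (simp add: eqv_def)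
qed

lemma eqv_sym: "eqv A B \<Longrightarrow> eqv B A"
proof -
  assume "eqv A B"
  then have "fsmult (-1) (fdiff (fmon (wd A)) (fmon (wd B))) \<in> I" unfolding eqv_def by (rule I_smult)
  moreover have "fsmult (-1) (fdiff (fmon (wd A)) (fmon (wd B))) = (fdiff (fmon (wd B)) (fmon (wd A)) :: ('g,'a) fpoly)"
    by (simp add: fsmult_def fdiff_def fun_eq_iff)
  ultimately show ?thesis by (simp add: eqv_def)
qed

lemma eqv_trans: "eqv A B \<Longrightarrow> eqv B C \<Longrightarrow> eqv A C"
proof -
  assume "eqv A B" "eqv B C"
  then have "fadd (fdiff (fmon (wd A)) (fmon (wd B))) (fdiff (fmon (wd B)) (fmon (wd C))) \<in> I"
    unfolding eqv_def by (rule I_add)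
  moreover have "fadd (fdiff (fmon (wd A)) (fmon (wd B))) (fdiff (fmon (wd B)) (fmon (wd C))) = (fdiff (fmon (wd A)) (fmon (wd C)) :: ('g,'a) fpoly)"
    by (simp add: fadd_def fdiff_def fun_eq_iff)
  ultimately show ?thesis by (simp add: eqv_def)
qed

lemma eqv_pre: "eqv A B \<Longrightarrow> eqv (C@A) (C@B)"
proof (cases "C = []")
  case False
  assume "eqv A B"
  then have "fmul (fmon (wd C)) (fdiff (fmon (wd A)) (fmon (wd B))) \<in> I"
    unfolding eqv_def using False by (intro I_mull fmon_free) auto
  then show ?thesis by (simp add: eqv_def fmul_fdiff_r fmul_fmon)
qed simp

lemma eqv_post: "eqv A B \<Longrightarrow> eqv (A@C) (B@C)"
proof (cases "C = []")
  case False
  assume "eqv A B"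
  then have "fmul (fdiff (fmon (wd A)) (fmon (wd B))) (fmon (wd C)) \<in> I"
    unfolding eqv_def using False by (intro I_mulr fmon_free) auto
  then show ?thesis by (simp add: eqv_def fmul_fdiff_l fmul_fmon)
qed simp

lemma walk_deg: "walk p A q \<Longrightarrow> list_all okE A \<Longrightarrow> wdeg (wd A) = - gs p + gs q"
proof (induction p A q rule: walk.induct)
  case (1 i j) then show ?case by (simp add: wdeg_def)
next
  case (2 i p r k es j)
  then have "h k = - gs i + gs r" by (simp add: okE_def Bg_def)
  moreover have "wdeg (wd ((p,r,k)#es)) = h k + wdeg (wd es)" by (simp add: wdeg_def wd_def)
  ultimately show ?case using 2 by (simp add: add.assoc)
qed

lemma walk_S: "walk p A q \<Longrightarrow> list_all okE A \<Longrightarrow> A \<noteq> [] \<Longrightarrow> (p,q) \<in> S"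
proof (induction p A q rule: walk.induct)
  case (1 i j) then show ?case by simp
next
  case (2 i p r k es j)
  then have pr: "(i,r) \<in> S" by (simp add: okE_def Bg_def)
  show ?case
  proof (cases "es = []")
    case True then show ?thesis using 2 pr by simp
  next
    case False then show ?thesis using 2 pr Strans by auto
  qed
qed


lemma move1:
  assumes "walk p A p" "walk p B p" "A \<noteq> []" "B \<noteq> []" "list_all okE A" "list_all okE B"
  shows "eqv (A@B) (B@A)"
proof -
  have pS: "(p,p) \<in> S" using walk_S assms by blast
  then have "(p,p) \<in> Bg gs S 0" by (simp add: Bg_def)
  then have G: "0 \<in> G0 gs S" by (auto simp: G0_def)
  then have gen: "fdiff (fmon [(0,1),(0,2)]) (fmon [(0,2),(0,1)]) \<in> I"
    using gens by (auto simp: U0_gens_def)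
  define \<sigma> :: "'g \<times> nat \<Rightarrow> ('g,'a) fpoly" where
    "\<sigma> v = (if v = (0,1) then fmon (wd A) else if v = (0,2) then fmon (wd B) else (\<lambda>_. 0))" for v
  have dA: "wdeg (wd A) = 0" using walk_deg assms by simp
  have dB: "wdeg (wd B) = 0" using walk_deg assms by simp
  have "graded_subst \<sigma>"
    unfolding graded_subst_def \<sigma>_def
    using assms dA dB by (auto intro!: fmon_free homog_fmon zero_free homog_zero)
  from I_subst[OF this gen]
  have "subst \<sigma> (fdiff (fmon [(0,1),(0,2)]) (fmon [(0,2),(0,1)])) \<in> I" .
  moreover have "subst \<sigma> (fdiff (fmon [(0,1),(0,2)]) (fmon [(0,2),(0,1)]))
     = fdiff (fmon (wd A @ wd B)) (fmon (wd B @ wd A))"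
    by (subst subst_diff) (auto simp: \<sigma>_def fprod_Cons fmul_Nil fmul_fmon fprod_def)
  ultimately show ?thesis by (simp add: eqv_def)
qed

lemma move2:
  assumes "walk p A q" "walk q B p" "walk p C q" "A \<noteq> []" "B \<noteq> []" "C \<noteq> []"
    "list_all okE A" "list_all okE B" "list_all okE C" "p \<noteq> q"
  shows "eqv (A@B@C) (C@B@A)"
proof -
  define g where "g = - gs p + gs q"
  have pS: "(p,q) \<in> S" using walk_S assms by blast
  then have pq: "p < n" "q < n" using Ssub by auto
  from pS have "(p,q) \<in> Bg gs S g" by (simp add: Bg_def g_def)
  then have G: "g \<in> G0 gs S" by (auto simp: G0_def)
  have g0: "g \<noteq> 0"
  proof
    assume "g = 0"
    then have "gs q = gs p" unfolding g_def by (metis add_minus_cancel add.right_neutral)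
    then show False using inj pq assms(10) by (auto simp: inj_on_def)
  qed
  have gen: "fdiff (fmon [(g,1),(-g,2),(g,3)]) (fmon [(g,3),(-g,2),(g,1)]) \<in> I"
    using gens G g0 by (auto simp: U0_gens_def)
  define \<sigma> :: "'g \<times> nat \<Rightarrow> ('g,'a) fpoly" where
    "\<sigma> v = (if v = (g,1) then fmon (wd A) else if v = (-g,2) then fmon (wd B)
            else if v = (g,3) then fmon (wd C) else (\<lambda>_. 0))" for v
  have dA: "wdeg (wd A) = g" using walk_deg assms by (simp add: g_def)
  have dC: "wdeg (wd C) = g" using walk_deg assms by (simp add: g_def)
  have dB: "wdeg (wd B) = - g" using walk_deg assms by (simp add: g_def minus_add)
  have "graded_subst \<sigma>"
    unfolding graded_subst_def \<sigma>_def
    using assms dA dB dC by (auto intro!: fmon_free homog_fmon zero_free homog_zero)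
  from I_subst[OF this gen]
  have "subst \<sigma> (fdiff (fmon [(g,1),(-g,2),(g,3)]) (fmon [(g,3),(-g,2),(g,1)])) \<in> I" .
  moreover have "subst \<sigma> (fdiff (fmon [(g,1),(-g,2),(g,3)]) (fmon [(g,3),(-g,2),(g,1)]))
     = fdiff (fmon (wd A @ wd B @ wd C)) (fmon (wd C @ wd B @ wd A))"
    by (subst subst_diff) (auto simp: \<sigma>_def fprod_Cons fmul_Nil fmul_fmon fprod_def)
  ultimately show ?thesis by (simp add: eqv_def)
qed


lemma edges_in_V:
  assumes "walk i P i" "(p,q,k) \<in> set P"
  shows "p \<in> {b. \<exists>P1 P2. P = P1@P2 \<and> walk i P1 b \<and> walk b P2 i}"
    and "q \<in> {b. \<exists>P1 P2. P = P1@P2 \<and> walk i P1 b \<and> walk b P2 i}"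
proof -
  obtain X Y where P: "P = X @ (p,q,k) # Y" using assms(2) by (meson split_list)
  from assms(1) obtain x where x: "walk i X x" "walk x ((p,q,k)#Y) i" unfolding P walk_append by blast
  then have "x = p" "walk q Y i" by auto
  then show "p \<in> {b. \<exists>P1 P2. P = P1@P2 \<and> walk i P1 b \<and> walk b P2 i}"
    using x P by blast
  have "walk i (X@[(p,q,k)]) q" using x \<open>x = p\<close> by (auto simp: walk_append)
  then show "q \<in> {b. \<exists>P1 P2. P = P1@P2 \<and> walk i P1 b \<and> walk b P2 i}"
    using \<open>walk q Y i\<close> P by (intro CollectI exI[of _ "X@[(p,q,k)]"] exI[of _ Y]) auto
qed

lemma main_comb:
  "walk i es j \<Longrightarrow> walk i fs j \<Longrightarrow> mset es = mset fs \<Longrightarrow> list_all okE es \<Longrightarrow> eqv es fs"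
proof (induction es arbitrary: i fs)
  case Nil
  then have "fs = []" by simp
  then show ?case using eqv_refl by simp
next
  case (Cons e1 es')
  obtain a k where e1: "e1 = (i,a,k)" and wes': "walk a es' j"
    using Cons.prems(1) by (cases e1) auto
  have okfs: "list_all okE fs"
    using Cons.prems(3,4) by (metis list.pred_set set_mset_mset)
  have "e1 \<in> set fs" using Cons.prems(3) by (metis list.set_intros(1) set_mset_mset)
  then obtain P R where fsPR: "fs = P @ e1 # R" and e1P: "e1 \<notin> set P"
    by (meson split_list_first)
  from Cons.prems(2) obtain x where "walk i P x" "walk x (e1#R) j"
    unfolding fsPR walk_append by blast
  then have wP: "walk i P i" and wR: "walk a R j" using e1 by auto
  have claim: "\<exists>fs'. eqv fs fs' \<and> (\<exists>R'. fs' = e1 # R') \<and> walk i fs' j \<and> mset fs' = mset fs"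
  proof (cases "P = []")
    case True
    then show ?thesis using eqv_refl fsPR Cons.prems by (intro exI[of _ fs]) auto
  next
    case Pne: False
    define V where "V = {b. \<exists>P1 P2. P = P1@P2 \<and> walk i P1 b \<and> walk b P2 i}"
    have ex: "\<exists>Q1 Q2 b. e1#R = Q1@Q2 \<and> Q1 \<noteq> [] \<and> walk i Q1 b \<and> walk b Q2 j \<and> b \<in> V"
    proof (rule ccontr)
      assume nex: "\<not> ?thesis"
      have H1: "q \<notin> V" if "e1#R = X @ (p,q,k') # Y" for X p q k' Y
      proof
        assume "q \<in> V"
        have "walk i (e1#R) j" using wR e1 by simp
        then have "walk i (X @ (p,q,k') # Y) j" using that by simp
        then obtain y where "walk i X y" "walk y ((p,q,k')#Y) j"
          unfolding walk_append by blast
        then have "walk i (X@[(p,q,k')]) q" "walk q Y j" by (auto simp: walk_append)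
        moreover have "e1#R = (X@[(p,q,k')]) @ Y" using that by simp
        ultimately have "\<exists>Q1 Q2 b. e1#R = Q1@Q2 \<and> Q1 \<noteq> [] \<and> walk i Q1 b \<and> walk b Q2 j \<and> b \<in> V"
          using \<open>q \<in> V\<close> by (intro exI[of _ "X@[(p,q,k')]"] exI[of _ Y] exI[of _ q]) simp
        then show False using nex by blast
      qed
      have aV: "a \<notin> V" using H1[of "[]" i a k R] e1 by simp
      have RV: "p \<notin> V \<and> q \<notin> V" if pin: "(p,q,k') \<in> set R" for p q k'
      proof
        obtain X Y where "R = X @ (p,q,k') # Y" using pin by (meson split_list)
        then show "q \<notin> V" using H1[of "e1#X" p q k' Y] by simp
        show "p \<notin> V"
        proof -
          from walk_src[OF wR pin] consider "p = a" | "\<exists>(p',q',k'')\<in>set R. q' = p" by blast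
          then show ?thesis
          proof cases
            case 1 then show ?thesis using aV by simp
          next
            case 2
            then obtain p' k'' where "(p',p,k'') \<in> set R" by auto
            then obtain X Y where "R = X @ (p',p,k'') # Y" by (meson split_list)
            then show ?thesis using H1[of "e1#X" p' p k'' Y] by simp
          qed
        qed
      qed
      obtain d P' where Pd: "P = d # P'" using Pne by (cases P) auto
      obtain b kd where d: "d = (i,b,kd)" using wP Pd by (cases d) auto
      have iV: "i \<in> V" unfolding V_def using wP by (intro CollectI exI[of _ "[]"] exI[of _ P]) simp
      have "d \<in> set fs" using fsPR Pd by simp
      then have "d \<in> set (e1#es')" using Cons.prems(3) by (metis set_mset_mset)
      moreover have "d \<noteq> e1" using e1P Pd by auto
      ultimately have "d \<in> set es'" by simp
      then have "\<exists>(p,q,k)\<in>set es'. p \<in> V" using d iV by auto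
      from crossing[OF wes' aV this] obtain p q k' where c: "(p,q,k') \<in> set es'" "p \<notin> V" "q \<in> V"
        by auto
      then have "(p,q,k') \<in> set fs" using Cons.prems(3) by (metis list.set_intros(2) set_mset_mset)
      then consider "(p,q,k') \<in> set P" | "(p,q,k') = e1" | "(p,q,k') \<in> set R" using fsPR by auto
      then show False
      proof cases
        case 1 then show ?thesis using edges_in_V[OF wP 1] c V_def by blast
      next
        case 2 then show ?thesis using c iV e1 by simp
      next
        case 3 then show ?thesis using RV c by blast
      qed
    qed
    then obtain Q1 Q2 b where Q: "e1#R = Q1@Q2" "Q1 \<noteq> []" "walk i Q1 b" "walk b Q2 j" "b \<in> V"
      by blast
    obtain P1 P2 where P12: "P = P1@P2" "walk i P1 b" "walk b P2 i" using Q(5) V_def by blast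
    obtain Q1' where Q1': "Q1 = e1 # Q1'" using Q(1,2) by (cases Q1) auto
    have fsQ: "fs = P @ Q1 @ Q2" using fsPR Q(1) by simp
    have okP: "list_all okE P" "list_all okE Q1" "list_all okE Q2" using okfs fsQ by auto
    show ?thesis
    proof (cases "b = i")
      case True
      have "eqv (P@Q1) (Q1@P)" using move1[OF wP] Q True Pne okP by blast
      then have "eqv fs (Q1@P@Q2)" using eqv_post[of "P@Q1" "Q1@P" Q2] fsQ by simp
      moreover have "walk i (Q1@P@Q2) j" using Q wP True by (auto simp: walk_append)
      ultimately show ?thesis using Q1' fsQ by (intro exI[of _ "Q1@P@Q2"]) auto
    next
      case False
      have P1ne: "P1 \<noteq> []" using P12 False by auto
      have P2ne: "P2 \<noteq> []" using P12 False by auto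
      have okP12: "list_all okE P1" "list_all okE P2" using okP P12 by auto
      have "eqv (P1@P2@Q1) (Q1@P2@P1)"
        using move2[OF P12(2) P12(3) Q(3) P1ne P2ne Q(2) okP12 okP(2)] False by auto
      then have "eqv fs (Q1@P2@P1@Q2)" using eqv_post[of "P1@P2@Q1" "Q1@P2@P1" Q2] fsQ P12 by simp
      moreover have "walk i (Q1@P2@P1@Q2) j" using Q P12 by (auto simp: walk_append)
      moreover have "mset (Q1@P2@P1@Q2) = mset fs" using fsQ P12 by simp
      ultimately show ?thesis using Q1' by (intro exI[of _ "Q1@P2@P1@Q2"]) auto
    qed
  qed
  then obtain R' where fs': "eqv fs (e1#R')" "walk i (e1#R') j" "mset (e1#R') = mset fs" by blast
  have "walk a R' j" using fs'(2) e1 by simp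
  moreover have "mset es' = mset R'"
  proof -
    have "add_mset e1 (mset es') = add_mset e1 (mset R')" using fs'(3) Cons.prems(3) by simp
    then show ?thesis by simp
  qed
  moreover have "list_all okE es'" using Cons.prems(4) by simp
  ultimately have "eqv es' R'" using Cons.IH wes' by blast
  then have "eqv (e1#es') (e1#R')" using eqv_pre[of es' R' "[e1]"] by simp
  then show ?case using fs'(1) eqv_sym eqv_trans by blast
qed


fun tr :: "nat \<Rightarrow> nat list \<Rightarrow> (nat \<times> nat \<times> nat) list" where
  "tr i [] = []"
| "tr i (k#u) = (i, ghat gs S (h k) i, k) # tr (ghat gs S (h k) i) u"

definition Ex :: "(nat \<times> nat \<times> nat) list \<Rightarrow> (nat \<times> nat \<times> nat) \<Rightarrow>\<^sub>0 nat" where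
  "Ex es = sum_list (map (\<lambda>e. Poly_Mapping.single e (1::nat)) es)"

lemma ghat_uniq: assumes "(i,j) \<in> Bg gs S g" shows "ghat gs S g i = j"
  unfolding ghat_def
proof (rule the_equality)
  show "(i,j) \<in> Bg gs S g" by fact
  fix j' assume j': "(i,j') \<in> Bg gs S g"
  then have "- gs i + gs j' = - gs i + gs j" using assms by (simp add: Bg_def)
  then have "gs j' = gs j" by simp
  moreover have "j < n" "j' < n" using assms j' Ssub by (auto simp: Bg_def)
  ultimately show "j' = j" using inj by (auto simp: inj_on_def)
qed

lemma Dhat_ok: "i \<in> Dhat gs S (h k) \<longleftrightarrow> okE (i, ghat gs S (h k) i, k)"
  unfolding Dhat_def okE_def using ghat_uniq by auto

lemma mono_eval_cons:
  "(mono_eval gs S n h (k#u) i j :: 'c::comm_ring_1 Omega) = (if okE (i, ghat gs S (h k) i, k)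
      then xi i (ghat gs S (h k) i) k * mono_eval gs S n h u (ghat gs S (h k) i) j else 0)"
proof -
  define a where "a = ghat gs S (h k) i"
  define C where "C = (mono_eval gs S n h u :: nat \<Rightarrow> nat \<Rightarrow> 'c Omega)"
  have "(mono_eval gs S n h (k#u) i j :: 'c Omega) = (\<Sum>l<n. generic gs S (h k) k i l * C l j)"
    by (simp add: mono_eval_def mprod_def mmul_def C_def)
  also have "\<dots> = (\<Sum>l<n. if l = a then (if okE (i,a,k) then xi i a k * C a j else 0) else 0)"
    by (rule sum.cong) (auto simp: generic_def Dhat_ok a_def)
  also have "\<dots> = (if okE (i,a,k) then xi i a k * C a j else 0)"
  proof -
    have "okE (i,a,k) \<Longrightarrow> a < n" using Ssub by (auto simp: okE_def Bg_def)
    then show ?thesis by auto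
  qed
  finally show ?thesis by (simp add: a_def C_def)
qed

lemma eval:
  "(mono_eval gs S n h u i j :: 'c::comm_ring_1 Omega) = (if list_all okE (tr i u) \<and> walk i (tr i u) j
      then Poly_Mapping.single (Ex (tr i u)) 1 else 0)"
proof (induction u arbitrary: i)
  case Nil
  then show ?case by (simp add: mono_eval_def mprod_def mone_def Ex_def)
next
  case (Cons k u)
  define a where "a = ghat gs S (h k) i"
  have "(xi i a k :: 'c Omega) * Poly_Mapping.single (Ex (tr a u)) 1 = Poly_Mapping.single (Ex (tr i (k#u))) 1"
    by (simp add: xi_def mult_single Ex_def a_def)
  then show ?case
    by (simp add: mono_eval_cons Cons.IH a_def[symmetric])
qed

lemma lookup_Ex: "Poly_Mapping.lookup (Ex es) x = count (mset es) x"
  by (induction es) (simp_all add: Ex_def lookup_add lookup_single when_def)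

lemma wd_tr: "wd (tr i u) = map (\<lambda>k. (h k, k)) u"
  by (induction u arbitrary: i) (simp_all add: wd_def)

lemma nz_iff:
  "(mono_eval gs S n h u i j :: 'c::comm_ring_1 Omega) \<noteq> 0 \<longleftrightarrow> list_all okE (tr i u) \<and> walk i (tr i u) j"
proof -
  have "(Poly_Mapping.single (Ex (tr i u)) 1 :: 'c Omega) \<noteq> 0"
    by (metis lookup_single_eq lookup_zero one_neq_zero)
  then show ?thesis by (simp add: eval)
qed

lemma final:
  assumes "(mono_eval gs S n h m i j :: 'a Omega) = mono_eval gs S n h w i j"
    and "list_all okE (tr i m) \<and> walk i (tr i m) j"
  shows "fdiff (mono_poly h m) (mono_poly h w) \<in> I"
proof -
  define es where "es = tr i m"
  define fs where "fs = tr i w"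
  have A: "list_all okE es \<and> walk i es j" using assms(2) by (simp add: es_def)
  have A2: "mono_eval gs S n h m i j = (Poly_Mapping.single (Ex es) 1 :: 'a Omega)"
    using A eval[of m i j] by (simp add: es_def)
  have "(mono_eval gs S n h w i j :: 'a Omega) \<noteq> 0" using assms(1) assms(2) nz_iff by metis
  then have B: "list_all okE fs \<and> walk i fs j" unfolding fs_def by (subst nz_iff[symmetric])
  have B2: "mono_eval gs S n h w i j = (Poly_Mapping.single (Ex fs) 1 :: 'a Omega)"
    using B eval[of w i j] by (simp add: fs_def)
  have "(Poly_Mapping.single (Ex es) 1 :: 'a Omega) = Poly_Mapping.single (Ex fs) 1"
    using assms(1) A2 B2 by simp
  then have "Poly_Mapping.lookup (Poly_Mapping.single (Ex es) (1::'a)) (Ex es) = Poly_Mapping.lookup (Poly_Mapping.single (Ex fs) 1) (Ex es)"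
    by simp
  then have "Ex es = Ex fs" by (simp add: lookup_single when_def split: if_splits)
  then have "mset es = mset fs"
    by (intro multiset_eqI) (metis lookup_Ex)
  then have "eqv es fs" using main_comb A B by blast
  then show ?thesis by (simp add: eqv_def es_def fs_def wd_tr mono_poly_def)
qed

end

theorem mainTheorem4:
  fixes n :: nat and gs :: "nat \<Rightarrow> 'g::group_add" and S :: "(nat \<times> nat) set"
    and h :: "nat \<Rightarrow> 'g" and m w :: "nat list"
  assumes "infinite (UNIV :: 'a::field set)"
    and "inj_on gs {0..<n}"
    and "S \<subseteq> {0..<n} \<times> {0..<n}"
    and "\<And>i j k. (i,j) \<in> S \<Longrightarrow> (j,k) \<in> S \<Longrightarrow> (i,k) \<in> S"
    and "\<exists>i<n. \<exists>j<n. (mono_eval gs S n h m i j :: 'a Omega) = mono_eval gs S n h w i j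
                     \<and> mono_eval gs S n h m i j \<noteq> 0"
  shows "fdiff (mono_poly h m) (mono_poly h w) \<in> (U0 gs S :: ('g, 'a) fpoly set)"
proof -
  show ?thesis unfolding U0_def TG_ideal_gen_def
  proof (rule InterI)
    fix I :: "('g,'a) fpoly set"
    assume "I \<in> {I. is_TG_ideal I \<and> U0_gens gs S \<subseteq> I}"
    then interpret setting n gs S h I
      using assms(2-4) by unfold_locales auto
    from assms(5) obtain i j where
      "(mono_eval gs S n h m i j :: 'a Omega) = mono_eval gs S n h w i j"
      "list_all okE (tr i m) \<and> walk i (tr i m) j"
      by (auto simp only: nz_iff)
    then show "fdiff (mono_poly h m) (mono_poly h w) \<in> I" using final by blast
  qed
qed

end
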